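(* Assume all thermal noise is zero ($\mathbf N_T=\mathbf 0$, $\mathbf N_D=\mathbf 0$). If the jammer is not eclipsed (in the sense of eclipsing with channel estimation defined in the context), then every minimizer $(\hat{\mathbf P},\hat{\mathbf H},\hat{\mathbf S}_D)$ of $$\min_{\tilde{\mathbf P}\in\mathscr G_{B-I}(\mathbb C^B),\ \tilde{\mathbf H}\in\mathbb C^{B\times U},\ \tilde{\mathbf S}_D\in\mathcal S^{U\times D}}\ \big\|\tilde{\mathbf P}\big([\mathbf Y_T,\mathbf Y_D]-\tilde{\mathbf H}[\mathbf S_T,\tilde{\mathbf S}_D]\big)\big\|_F^2$$ satisfies $\hat{\mathbf P}=\mathbf I_B-\mathbf J\mathbf J^\dagger$, $\hat{\mathbf P}\hat{\mathbf H}=\hat{\mathbf P}\mathbf H$, and $\hat{\mathbf S}_D=\mathbf S_D$ (and such minimizers exist).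
   Context: Let $B,U,I,T,D$ be positive integers with $B\ge U+I$ and $T\ge U$. Let $\mathcal S=\{(\pm1\pm i)/\sqrt2\}\subset\mathbb C$ (QPSK). Let $\mathbf H\in\mathbb C^{B\times U}$, $\mathbf J\in\mathbb C^{B\times I}$ with $[\mathbf H,\mathbf J]$ of full column rank $U+I$. Let $\mathbf S_T\in\mathbb C^{U\times T}$ be a pilot matrix of full row rank $U$, $\mathbf S_D\in\mathcal S^{U\times D}$, $\mathbf W_T\in\mathbb C^{I\times T}$, $\mathbf W_D\in\mathbb C^{I\times D}$, noise $\mathbf N_T,\mathbf N_D$, and $\mathbf Y_T=\mathbf H\mathbf S_T+\mathbf J\mathbf W_T+\mathbf N_T$, $\mathbf Y_D=\mathbf H\mathbf S_D+\mathbf J\mathbf W_D+\mathbf N_D$; $[\mathbf A,\mathbf B]$ is horizontal concatenation. $\mathbf A^\dagger$ is the Moore–Penrose pseudoinverse. $\mathscr G_{B-I}(\mathbb C^B)$ denotes the set of $B\times B$ orthogonal projections onto $(B-I)$-dimensional subspaces of $\mathbb C^B$. Eclipsing with channel estimation: the jammer is eclipsed if there exists $\tilde{\mathbf S}_D\in\mathcal S^{U\times D}\setminus\{\mathbf S_D\}$ such that $\begin{bmatrix}\mathbf S_D-\tilde{\mathbf S}_D\\ \mathbf W_D-\mathbf W_T\mathbf S_T^\dagger\tilde{\mathbf S}_D\end{bmatrix}$ has rank at most $I$. *)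

theory Defs
  imports "Jordan_Normal_Form.Schur_Decomposition" "Jordan_Normal_Form.DL_Rank"
begin

text \<open>Rank of a matrix (dimension of its column space).\<close>
definition mrank :: "complex mat \<Rightarrow> nat" where
  "mrank A = vec_space.rank (dim_row A) A"

text \<open>Horizontal concatenation [A, B].\<close>
definition append_cols :: "complex mat \<Rightarrow> complex mat \<Rightarrow> complex mat" where
  "append_cols A B = four_block_mat A B (0\<^sub>m 0 (dim_col A)) (0\<^sub>m 0 (dim_col B))"

text \<open>Moore--Penrose pseudoinverse: the unique matrix satisfying the Penrose conditions.\<close>
definition pinv :: "complex mat \<Rightarrow> complex mat" where
  "pinv A = (THE X. X \<in> carrier_mat (dim_col A) (dim_row A) \<and>
      A * X * A = A \<and> X * A * X = X \<and>
      mat_adjoint (A * X) = A * X \<and> mat_adjoint (X * A) = X * A)"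

text \<open>QPSK constellation {(+-1 +- i)/sqrt 2}.\<close>
definition qpsk :: "complex set" where
  "qpsk = {(complex_of_real a + \<i> * complex_of_real b) / complex_of_real (sqrt 2) | a b.
            a \<in> {-1, 1} \<and> b \<in> {-1, 1}}"

definition qpsk_mats :: "nat \<Rightarrow> nat \<Rightarrow> complex mat set" where
  "qpsk_mats m n = {S \<in> carrier_mat m n. \<forall>i<m. \<forall>j<n. S $$ (i, j) \<in> qpsk}"

text \<open>Squared Frobenius norm.\<close>
definition frob_sq :: "complex mat \<Rightarrow> real" where
  "frob_sq A = (\<Sum>i<dim_row A. \<Sum>j<dim_col A. (cmod (A $$ (i, j)))\<^sup>2)"

text \<open>Orthogonal projections of C^n onto k-dimensional subspaces (the Grassmannian G_k(C^n)).\<close>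
definition orth_projs :: "nat \<Rightarrow> nat \<Rightarrow> complex mat set" where
  "orth_projs n k = {P \<in> carrier_mat n n. P * P = P \<and> mat_adjoint P = P \<and> mrank P = k}"

text \<open>Eclipsing with channel estimation.\<close>
definition eclipsed_ce :: "nat \<Rightarrow> nat \<Rightarrow> nat \<Rightarrow> complex mat \<Rightarrow> complex mat \<Rightarrow> complex mat \<Rightarrow> complex mat \<Rightarrow> bool" where
  "eclipsed_ce U D I S_T S_D W_T W_D =
    (\<exists>St \<in> qpsk_mats U D. St \<noteq> S_D \<and>
       mrank ((S_D - St) @\<^sub>r (W_D - W_T * pinv S_T * St)) \<le> I)"

text \<open>Objective of the joint estimation problem.\<close>
definition jml_cost :: "complex mat \<Rightarrow> complex mat \<Rightarrow> complex mat \<Rightarrow> complex mat \<Rightarrow> complex mat \<Rightarrow> complex mat \<Rightarrow> real" where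
  "jml_cost Y_T Y_D S_T P Ht St = frob_sq (P * (append_cols Y_T Y_D - Ht * append_cols S_T St))"

definition is_jml_minimizer ::
  "nat \<Rightarrow> nat \<Rightarrow> nat \<Rightarrow> nat \<Rightarrow> complex mat \<Rightarrow> complex mat \<Rightarrow> complex mat \<Rightarrow> complex mat \<Rightarrow> complex mat \<Rightarrow> complex mat \<Rightarrow> bool" where
  "is_jml_minimizer B U I D Y_T Y_D S_T P Ht St =
    (P \<in> orth_projs B (B - I) \<and> Ht \<in> carrier_mat B U \<and> St \<in> qpsk_mats U D \<and>
     (\<forall>P' \<in> orth_projs B (B - I). \<forall>H' \<in> carrier_mat B U. \<forall>S' \<in> qpsk_mats U D.
        jml_cost Y_T Y_D S_T P Ht St \<le> jml_cost Y_T Y_D S_T P' H' S'))"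

end

theory Submission
  imports Defs "Jordan_Normal_Form.Matrix_Kernel"
begin


lemma mat_linear_map:
  fixes A :: "complex mat"
  assumes A: "A \<in> carrier_mat n n"
  shows "linear_map class_ring (module_vec TYPE(complex) n) (module_vec TYPE(complex) n) (\<lambda>x. A *\<^sub>v x)"
proof -
  interpret V: vec_space "TYPE(complex)" n .
  show ?thesis
    apply (unfold_locales)
    unfolding LinearCombinations.module_hom_def
    using A by (auto simp: mult_add_distrib_mat_vec mult_mat_vec module_vec_simps class_ring_simps)
qed

lemma rank_nullity_sq:
  fixes A :: "complex mat"
  assumes A: "A \<in> carrier_mat n n"
  shows "vec_space.rank n A + vectorspace.dim class_ring ((module_vec TYPE(complex) n)\<lparr>carrier := mat_kernel A\<rparr>) = n"
proof -
  interpret V: vec_space "TYPE(complex)" n .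
  interpret L: linear_map class_ring "module_vec TYPE(complex) n" "module_vec TYPE(complex) n" "\<lambda>x. A *\<^sub>v x"
    by (rule mat_linear_map[OF A])
  have im: "L.imT = V.col_space A"
    unfolding V.col_space_eq[OF A] mod_hom.im_def[OF L.mod_hom_axioms] using A by (auto simp: module_vec_simps)
  have ker: "L.kerT = mat_kernel A"
    unfolding mat_kernel_def mod_hom.ker_def[OF L.mod_hom_axioms] using A by (auto simp: module_vec_simps)
  have "vectorspace.dim class_ring ((module_vec TYPE(complex) n)\<lparr>carrier := L.imT\<rparr>) +
     vectorspace.dim class_ring ((module_vec TYPE(complex) n)\<lparr>carrier := L.kerT\<rparr>) = n"
    using L.rank_nullity V.dim_is_n V.fin_dim by simp
  then show ?thesis unfolding im ker V.rank_def V.col_space_def by simp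
qed

lemma kernel_span:
  fixes A :: "complex mat"
  assumes A: "A \<in> carrier_mat n n"
  shows "\<exists>ws. length ws = n - vec_space.rank n A \<and> set ws \<subseteq> carrier_vec n \<and>
     (\<forall>x \<in> carrier_vec n. A *\<^sub>v x = 0\<^sub>v n \<longrightarrow> (\<exists>c \<in> carrier_vec (length ws). x = mat_of_cols n ws *\<^sub>v c))"
proof -
  interpret V: vec_space "TYPE(complex)" n .
  interpret L: linear_map class_ring "module_vec TYPE(complex) n" "module_vec TYPE(complex) n" "\<lambda>x. A *\<^sub>v x"
    by (rule mat_linear_map[OF A])
  interpret K: kernel n n A by (unfold_locales, rule A)
  have ker: "L.kerT = mat_kernel A"
    unfolding mat_kernel_def mod_hom.ker_def[OF L.mod_hom_axioms] using A by (auto simp: module_vec_simps)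
  have sub: "submodule class_ring (mat_kernel A) V.V"
    using L.kerT_is_subspace unfolding ker subspace_def by auto
  obtain B where finB: "finite B" and bas: "K.basis B" using kernel_basis_exists[OF A] by blast
  have BK: "B \<subseteq> mat_kernel A" and gen: "K.span B = mat_kernel A"
    using bas unfolding K.Ker.basis_def by auto
  have cardB: "card B = K.dim" using K.Ker.dim_basis[OF finB bas] by simp
  have rn: "V.rank A + K.dim = n" using rank_nullity_sq[OF A] by simp
  obtain ws where ws: "set ws = B" "distinct ws" using finite_distinct_list[OF finB] by blast
  have len: "length ws = n - V.rank A" using ws cardB rn distinct_card by fastforce
  have wsc: "set ws \<subseteq> carrier_vec n" using ws BK unfolding mat_kernel_def using A by auto
  have spanB: "V.span B = mat_kernel A"
    using V.span_li_not_depend(1)[OF BK sub] gen by simp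
  have cs: "V.col_space (mat_of_cols n ws) = mat_kernel A"
    unfolding V.col_space_def cols_mat_of_cols[OF wsc] ws(1) spanB ..
  show ?thesis
  proof (intro exI conjI ballI impI)
    show "length ws = n - V.rank A" by (rule len)
    show "set ws \<subseteq> carrier_vec n" by (rule wsc)
    fix x assume "x \<in> carrier_vec n" "A *\<^sub>v x = 0\<^sub>v n"
    then have "x \<in> mat_kernel A" unfolding mat_kernel_def using A by auto
    then have "x \<in> V.col_space (mat_of_cols n ws)" using cs by simp
    then show "\<exists>c\<in>carrier_vec (length ws). x = mat_of_cols n ws *\<^sub>v c"
      unfolding V.col_space_eq[OF mat_of_cols_carrier(1)] by auto
  qed
qed

lemma rank_le_span:
  fixes A C :: "complex mat"
  assumes A: "A \<in> carrier_mat n a" and C: "C \<in> carrier_mat n c"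
    and cols: "\<And>j. j < a \<Longrightarrow> \<exists>y \<in> carrier_vec c. col A j = C *\<^sub>v y"
  shows "vec_space.rank n A \<le> c"
proof -
  interpret V: vec_space "TYPE(complex)" n .
  let ?S = "set (cols C)"
  have Sc: "?S \<subseteq> carrier_vec n" using C cols_dim by blast
  have sub1: "set (cols A) \<subseteq> V.span ?S"
  proof
    fix v assume "v \<in> set (cols A)"
    then obtain j where j: "j < a" "v = col A j" using A by (metis carrier_matD(2) cols_length cols_nth in_set_conv_nth)
    obtain y where y: "y \<in> carrier_vec c" "col A j = C *\<^sub>v y" using cols[OF j(1)] by blast
    have "C *\<^sub>v y \<in> V.col_space C" unfolding V.col_space_eq[OF C] using C y by auto
    then show "v \<in> V.span ?S" using j y unfolding V.col_space_def by simp
  qed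
  have vs: "vectorspace class_ring (V.vs (V.span ?S))"
    using V.span_is_subspace[THEN V.subspace_is_vs, OF Sc] by auto
  have subm: "submodule class_ring (V.span ?S) V.V" by (simp add: V.span_is_submodule Sc)
  have "VectorSpace.subspace class_ring (V.span (set (cols A))) (V.vs (V.span ?S))"
    using vectorspace.span_is_subspace[OF vs, of "set (cols A)", unfolded
    V.span_li_not_depend(1)[OF sub1 subm]] sub1 by auto
  moreover have fd: "vectorspace.fin_dim class_ring (V.vs (V.span ?S))"
       "vectorspace.fin_dim class_ring (V.vs (V.span ?S)\<lparr>carrier := V.span (set (cols A))\<rparr>)"
    using V.fin_dim_span_cols A C by auto
  ultimately have "V.rank A \<le> V.rank C" unfolding V.rank_def
    using vectorspace.subspace_dim[OF vs] by simp
  also have "\<dots> \<le> c" using V.rank_le_nc[OF C] .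
  finally show ?thesis .
qed

lemma rank_ge1:
  fixes A :: "complex mat"
  assumes A: "A \<in> carrier_mat n m" and j: "j < m" and nz: "col A j \<noteq> 0\<^sub>v n"
  shows "vec_space.rank n A \<ge> 1"
proof -
  interpret V: vec_space "TYPE(complex)" n .
  let ?v = "col A j"
  have vc: "?v \<in> carrier_vec n" using A j by auto
  obtain i where i: "i < n" "?v $ i \<noteq> 0" using nz vc by (metis carrier_vecD eq_vecI index_zero_vec)
  have li: "V.lin_indpt {?v}"
  proof (rule V.finite_lin_indpt2)
    show "finite {?v}" by simp
    show "{?v} \<subseteq> carrier_vec n" using vc by simp
    fix a assume "V.lincomb a {?v} = 0\<^sub>v n"
    then have "V.lincomb a {?v} $ i = 0" using i by simp
    then have "a ?v * ?v $ i = 0" using V.lincomb_index[OF i(1), of "{?v}" a] vc by simp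
    then show "\<forall>v\<in>{?v}. a v = 0" using i by (simp add: class_ring_simps)
  qed
  have "{?v} \<subseteq> set (cols A)" using A j by (simp add: cols_def)
  from V.rank_ge_card_indpt[OF A this li] show ?thesis by simp
qed

lemma row_kernel:
  fixes w :: "complex vec"
  assumes w: "w \<in> carrier_vec n" and nz: "w \<noteq> 0\<^sub>v n"
  shows "\<exists>ws. length ws \<le> n - 1 \<and> set ws \<subseteq> carrier_vec n \<and>
     (\<forall>x \<in> carrier_vec n. w \<bullet> x = 0 \<longrightarrow> (\<exists>c \<in> carrier_vec (length ws). x = mat_of_cols n ws *\<^sub>v c))"
proof -
  obtain k where k: "k < n" "w $ k \<noteq> 0" using nz w by (metis carrier_vecD eq_vecI index_zero_vec)
  define K0 where "K0 = mat n n (\<lambda>(i,j). if i = 0 then w $ j else 0)"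
  have K0: "K0 \<in> carrier_mat n n" unfolding K0_def by simp
  have "col K0 k \<noteq> 0\<^sub>v n"
  proof
    assume "col K0 k = 0\<^sub>v n"
    then have "col K0 k $ 0 = 0" using k by simp
    then show False using k unfolding K0_def by simp
  qed
  then have r1: "vec_space.rank n K0 \<ge> 1" using rank_ge1[OF K0 k(1)] by simp
  obtain ws where ws: "length ws = n - vec_space.rank n K0" "set ws \<subseteq> carrier_vec n"
     "\<forall>x \<in> carrier_vec n. K0 *\<^sub>v x = 0\<^sub>v n \<longrightarrow> (\<exists>c \<in> carrier_vec (length ws). x = mat_of_cols n ws *\<^sub>v c)"
    using kernel_span[OF K0] by blast
  show ?thesis
  proof (intro exI conjI ballI impI)
    show "length ws \<le> n - 1" using ws(1) r1 by simp
    show "set ws \<subseteq> carrier_vec n" by (rule ws(2))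
    fix x assume x: "x \<in> carrier_vec n" "w \<bullet> x = 0"
    have "K0 *\<^sub>v x = 0\<^sub>v n"
    proof (rule eq_vecI)
      fix i assume "i < dim_vec (0\<^sub>v n :: complex vec)"
      then have i: "i < n" by simp
      have "row K0 i = (if i = 0 then w else 0\<^sub>v n)"
        using i w unfolding K0_def by (auto intro!: eq_vecI)
      then show "(K0 *\<^sub>v x) $ i = 0\<^sub>v n $ i" using i x K0 by auto
    qed (use K0 in simp)
    then show "\<exists>c\<in>carrier_vec (length ws). x = mat_of_cols n ws *\<^sub>v c" using ws(3) x by blast
  qed
qed

lemma mat_unit_vec_col:
  fixes A :: "'a::comm_ring_1 mat"
  assumes "A \<in> carrier_mat n m" "i < m"
  shows "A *\<^sub>v unit_vec m i = col A i"
  by (rule eq_vecI, insert assms, auto simp: row_def col_def)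

lemma full_rank_inj:
  fixes A :: "complex mat"
  assumes A: "A \<in> carrier_mat n m" and r: "vec_space.rank n A = m"
    and v: "v \<in> carrier_vec m" and Av: "A *\<^sub>v v = 0\<^sub>v n"
  shows "v = 0\<^sub>v m"
proof (rule ccontr)
  interpret V: vec_space "TYPE(complex)" n .
  assume nz: "v \<noteq> 0\<^sub>v m"
  have dist: "distinct (cols A)"
  proof (rule ccontr)
    assume nd: "\<not> distinct (cols A)"
    obtain S where S: "maximal S (\<lambda>T. T \<subseteq> set (cols A) \<and> V.lin_indpt T)"
      using maximal_exists[of "(\<lambda>T. T \<subseteq> set (cols A) \<and> V.lin_indpt T)" "card (set (cols A))" "{}"]
      by (meson List.finite_set card_mono empty_iff empty_subsetI V.finite_lin_indpt2 rev_finite_subset)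
    then have "card S \<le> card (set (cols A))" by (simp add: card_mono maximal_def)
    moreover have "card (set (cols A)) < m"
      using nd A card_distinct card_length cols_length carrier_matD(2) le_neq_implies_less by metis
    ultimately have "card S < m" by simp
    then show False using V.rank_card_indpt[OF A S] r by simp
  qed
  have "V.lin_indpt (set (cols A))" using V.full_rank_lin_indpt[OF A r dist] .
  moreover have "V.lin_dep (set (cols A))" using V.lin_depI[OF A v nz Av dist] .
  ultimately show False by simp
qed

lemma inj_full_rank:
  fixes A :: "complex mat"
  assumes A: "A \<in> carrier_mat n m"
    and inj: "\<And>v. v \<in> carrier_vec m \<Longrightarrow> A *\<^sub>v v = 0\<^sub>v n \<Longrightarrow> v = 0\<^sub>v m"
  shows "vec_space.rank n A = m"
proof -
  interpret V: vec_space "TYPE(complex)" n .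
  have dist: "distinct (cols A)"
  proof (rule ccontr)
    assume "\<not> distinct (cols A)"
    then obtain i j where ij: "i \<noteq> j" "i < m" "j < m" "col A i = col A j"
      using A by (metis carrier_matD(2) cols_length cols_nth distinct_conv_nth)
    define e :: "complex vec" where "e = unit_vec m i - unit_vec m j"
    have ec: "e \<in> carrier_vec m" unfolding e_def by simp
    have "e $ i = 1" using ij unfolding e_def by simp
    then have "e \<noteq> 0\<^sub>v m" using ij by auto
    moreover have "A *\<^sub>v e = 0\<^sub>v n"
      unfolding e_def using A ij
      by (simp add: mult_minus_distrib_mat_vec mat_unit_vec_col)
    ultimately show False using inj ec by blast
  qed
  have "V.lin_indpt (set (cols A))"
  proof
    assume "V.lin_dep (set (cols A))"
    then obtain v where "v \<in> carrier_vec m" "v \<noteq> 0\<^sub>v m" "A *\<^sub>v v = 0\<^sub>v n"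
      using V.lin_depE[OF A _ dist] by blast
    then show False using inj by blast
  qed
  then show ?thesis using V.lin_indpt_full_rank[OF A dist] by simp
qed


lemma adj_dims[simp]: "dim_row (mat_adjoint A) = dim_col A" "dim_col (mat_adjoint A) = dim_row A"
  unfolding mat_adjoint_def by simp_all
lemma adj_carrier[simp]: "A \<in> carrier_mat n m \<Longrightarrow> mat_adjoint A \<in> carrier_mat m n"
  by (intro carrier_matI, auto)
lemma adj_index[simp]: "i < dim_col A \<Longrightarrow> j < dim_row A \<Longrightarrow> mat_adjoint A $$ (i,j) = cnj (A $$ (j,i))"
  unfolding mat_adjoint_def by (simp add: mat_of_rows_index)
lemma adj_adj[simp]: "mat_adjoint (mat_adjoint (A::complex mat)) = A"
  by (rule eq_matI, auto)
lemma adj_mult: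
  fixes A B :: "complex mat"
  assumes "A \<in> carrier_mat n m" "B \<in> carrier_mat m k"
  shows "mat_adjoint (A * B) = mat_adjoint B * mat_adjoint A"
  by (rule eq_matI, insert assms, auto simp: scalar_prod_def cnj_sum mult.commute intro!: sum.cong)

lemma adj_add:
  fixes A B :: "complex mat"
  assumes "A \<in> carrier_mat n m" "B \<in> carrier_mat n m"
  shows "mat_adjoint (A + B) = mat_adjoint A + mat_adjoint B"
  by (rule eq_matI, insert assms, auto)

lemma adj_minus:
  fixes A B :: "complex mat"
  assumes "A \<in> carrier_mat n m" "B \<in> carrier_mat n m"
  shows "mat_adjoint (A - B) = mat_adjoint A - mat_adjoint B"
  by (rule eq_matI, insert assms, auto)

lemma adj_one[simp]: "mat_adjoint (1\<^sub>m n :: complex mat) = 1\<^sub>m n"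
  by (rule eq_matI, auto)

lemma sum_cnj_sq_zero:
  fixes y :: "complex vec"
  assumes y: "y \<in> carrier_vec n" and s: "(\<Sum>i<n. cnj (y $ i) * y $ i) = 0"
  shows "y = 0\<^sub>v n"
proof -
  have "(\<Sum>i<n. cnj (y $ i) * y $ i) = complex_of_real (\<Sum>i<n. (cmod (y $ i))\<^sup>2)"
  proof -
    have t: "\<And>z::complex. cnj z * z = complex_of_real ((cmod z)\<^sup>2)"
      using complex_norm_square by (metis mult.commute of_real_power)
    show ?thesis unfolding of_real_sum t ..
  qed
  then have "complex_of_real (\<Sum>i<n. (cmod (y $ i))\<^sup>2) = 0" using s by metis
  then have "(\<Sum>i<n. (cmod (y $ i))\<^sup>2) = 0" by (simp only: of_real_eq_0_iff)
  then have "\<forall>i\<in>{..<n}. (cmod (y $ i))\<^sup>2 = 0" by (subst sum_nonneg_eq_0_iff[symmetric], auto)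
  then show ?thesis using y by (auto intro!: eq_vecI)
qed

lemma adj_mult_inj:
  fixes A :: "complex mat"
  assumes A: "A \<in> carrier_mat n m" and v: "v \<in> carrier_vec m"
    and z: "(mat_adjoint A * A) *\<^sub>v v = 0\<^sub>v m"
  shows "A *\<^sub>v v = 0\<^sub>v n"
proof -
  let ?y = "A *\<^sub>v v"
  have y: "?y \<in> carrier_vec n" using A v by simp
  have e1: "(mat_adjoint A * A) *\<^sub>v v = mat_adjoint A *\<^sub>v ?y"
    using A v by (simp add: assoc_mult_mat_vec[of _ m n _ m])
  have yi: "\<And>i. i < n \<Longrightarrow> ?y $ i = (\<Sum>j<m. A $$ (i,j) * v $ j)"
    using A v by (simp add: scalar_prod_def atLeast0LessThan)
  have "conjugate v \<bullet> (mat_adjoint A *\<^sub>v ?y) = (\<Sum>j<m. cnj (v $ j) * (\<Sum>i<n. cnj (A $$ (i,j)) * ?y $ i))"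
    using A v by (simp add: scalar_prod_def atLeast0LessThan)
  also have "\<dots> = (\<Sum>j<m. \<Sum>i<n. cnj (v $ j) * cnj (A $$ (i,j)) * ?y $ i)"
    by (simp add: sum_distrib_left mult.assoc)
  also have "\<dots> = (\<Sum>i<n. \<Sum>j<m. cnj (v $ j) * cnj (A $$ (i,j)) * ?y $ i)"
    by (rule sum.swap)
  also have "\<dots> = (\<Sum>i<n. cnj (\<Sum>j<m. A $$ (i,j) * v $ j) * ?y $ i)"
    by (simp add: cnj_sum sum_distrib_right sum_distrib_left mult_ac)
  also have "\<dots> = (\<Sum>i<n. cnj (?y $ i) * ?y $ i)"
    using yi by simp
  finally have e2: "conjugate v \<bullet> (mat_adjoint A *\<^sub>v ?y) = (\<Sum>i<n. cnj (?y $ i) * ?y $ i)" .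
  have "(\<Sum>i<n. cnj (?y $ i) * ?y $ i) = 0" using z v e1 e2 by simp
  then show ?thesis using sum_cnj_sq_zero[OF y] by simp
qed

lemma inj_sq_inverse:
  fixes A :: "complex mat"
  assumes A: "A \<in> carrier_mat n n"
    and inj: "\<And>v. v \<in> carrier_vec n \<Longrightarrow> A *\<^sub>v v = 0\<^sub>v n \<Longrightarrow> v = 0\<^sub>v n"
  shows "\<exists>N \<in> carrier_mat n n. A * N = 1\<^sub>m n \<and> N * A = 1\<^sub>m n"
proof -
  have "det A \<noteq> 0" using det_0_iff_vec_prod_zero_field[OF A] inj by blast
  from det_non_zero_imp_unit[OF A this, of "()"]
  show ?thesis unfolding Units_def by (auto simp: ring_mat_simps)
qed

lemma gram_inverse:
  fixes A :: "complex mat"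
  assumes A: "A \<in> carrier_mat n m"
    and inj: "\<And>v. v \<in> carrier_vec m \<Longrightarrow> A *\<^sub>v v = 0\<^sub>v n \<Longrightarrow> v = 0\<^sub>v m"
  shows "\<exists>N \<in> carrier_mat m m. (mat_adjoint A * A) * N = 1\<^sub>m m \<and> N * (mat_adjoint A * A) = 1\<^sub>m m"
  by (rule inj_sq_inverse, insert A, force, metis adj_mult_inj[OF A] inj)

lemma adj_herm_inv:
  fixes G N :: "complex mat"
  assumes G: "G \<in> carrier_mat m m" and N: "N \<in> carrier_mat m m"
    and GH: "mat_adjoint G = G" and GN: "G * N = 1\<^sub>m m" and NG: "N * G = 1\<^sub>m m"
  shows "mat_adjoint N = N"
proof -
  have "mat_adjoint N * G = 1\<^sub>m m"
    using adj_mult[OF G N] GN GH by simp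
  then have "mat_adjoint N * G * N = N" using N by simp
  moreover have "mat_adjoint N * G * N = mat_adjoint N"
    using assoc_mult_mat[of "mat_adjoint N" m m G m N m] N G GN by simp
  ultimately show ?thesis by simp
qed

lemma pinv_inj:
  fixes A :: "complex mat"
  assumes A: "A \<in> carrier_mat n m"
    and inj: "\<And>v. v \<in> carrier_vec m \<Longrightarrow> A *\<^sub>v v = 0\<^sub>v n \<Longrightarrow> v = 0\<^sub>v m"
  shows "\<exists>N \<in> carrier_mat m m. mat_adjoint N = N \<and> (mat_adjoint A * A) * N = 1\<^sub>m m \<and> N * (mat_adjoint A * A) = 1\<^sub>m m
     \<and> pinv A = N * mat_adjoint A"
proof -
  obtain N where N: "N \<in> carrier_mat m m" and GN: "(mat_adjoint A * A) * N = 1\<^sub>m m"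
    and NG: "N * (mat_adjoint A * A) = 1\<^sub>m m"
    using gram_inverse[OF A inj] by blast
  have AH: "mat_adjoint A \<in> carrier_mat m n" using A by simp
  have G: "mat_adjoint A * A \<in> carrier_mat m m" using mult_carrier_mat[OF adj_carrier[OF A] A] .
  have GH: "mat_adjoint (mat_adjoint A * A) = mat_adjoint A * A"
    using adj_mult[OF AH A] by simp
  have NH: "mat_adjoint N = N" by (rule adj_herm_inv[OF G N GH GN NG])
  define X where "X = N * mat_adjoint A"
  have X: "X \<in> carrier_mat m n" unfolding X_def using mult_carrier_mat[OF N AH] .
  have XA: "X * A = 1\<^sub>m m" unfolding X_def using NG assoc_mult_mat[OF N AH A] by simp
  have P1: "A * X * A = A" using assoc_mult_mat[OF A X A] XA A by simp
  have P2: "X * A * X = X" using XA X by simp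
  have P3: "mat_adjoint (A * X) = A * X"
  proof -
    have "mat_adjoint (A * X) = mat_adjoint X * mat_adjoint A" using adj_mult[OF A X] .
    also have "mat_adjoint X = A * N" unfolding X_def using adj_mult[OF N AH] NH by simp
    also have "A * N * mat_adjoint A = A * X" unfolding X_def using assoc_mult_mat[OF A N AH] .
    finally show ?thesis .
  qed
  have P4: "mat_adjoint (X * A) = X * A" using XA by simp
  have uniq: "Y = X" if Y: "Y \<in> carrier_mat m n" and Y1: "A * Y * A = A" and Y3: "mat_adjoint (A * Y) = A * Y" for Y
  proof -
    have "mat_adjoint A = mat_adjoint (A * Y * A)" using Y1 by simp
    also have "\<dots> = mat_adjoint A * mat_adjoint (A * Y)" using adj_mult[of "A * Y" n n A m] A Y by simp
    also have "\<dots> = mat_adjoint A * (A * Y)" using Y3 by simp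
    finally have e: "mat_adjoint A = mat_adjoint A * (A * Y)" .
    have "X = N * (mat_adjoint A * (A * Y))" unfolding X_def using e by simp
    also have "\<dots> = N * (mat_adjoint A * A) * Y"
      using assoc_mult_mat[OF AH A Y] assoc_mult_mat[OF N G Y] by simp
    also have "\<dots> = Y" using NG Y by simp
    finally show ?thesis by simp
  qed
  have "pinv A = X" unfolding pinv_def
  proof (rule the_equality)
    show "X \<in> carrier_mat (dim_col A) (dim_row A) \<and> A * X * A = A \<and> X * A * X = X \<and>
      mat_adjoint (A * X) = A * X \<and> mat_adjoint (X * A) = X * A" using X A P1 P2 P3 P4 by simp
  next
    fix Y assume "Y \<in> carrier_mat (dim_col A) (dim_row A) \<and> A * Y * A = A \<and> Y * A * Y = Y \<and>
      mat_adjoint (A * Y) = A * Y \<and> mat_adjoint (Y * A) = Y * A"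
    then show "Y = X" using uniq A by auto
  qed
  then show ?thesis using N NH GN NG unfolding X_def by blast
qed

lemma pinv_surj:
  fixes S :: "complex mat"
  assumes S: "S \<in> carrier_mat m n"
    and inj: "\<And>w. w \<in> carrier_vec m \<Longrightarrow> mat_adjoint S *\<^sub>v w = 0\<^sub>v n \<Longrightarrow> w = 0\<^sub>v m"
  shows "S * pinv S = 1\<^sub>m m" "pinv S \<in> carrier_mat n m"
proof -
  have SH: "mat_adjoint S \<in> carrier_mat n m" using S by simp
  obtain N where N: "N \<in> carrier_mat m m" and GN: "(S * mat_adjoint S) * N = 1\<^sub>m m"
    and NG: "N * (S * mat_adjoint S) = 1\<^sub>m m"
    using gram_inverse[OF SH inj] by auto
  have G: "S * mat_adjoint S \<in> carrier_mat m m" using mult_carrier_mat[OF S SH] .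
  have GH: "mat_adjoint (S * mat_adjoint S) = S * mat_adjoint S"
    using adj_mult[OF S SH] by simp
  have NH: "mat_adjoint N = N" by (rule adj_herm_inv[OF G N GH GN NG])
  define X where "X = mat_adjoint S * N"
  have X: "X \<in> carrier_mat n m" unfolding X_def using mult_carrier_mat[OF SH N] .
  have SX: "S * X = 1\<^sub>m m" unfolding X_def using GN assoc_mult_mat[OF S SH N] by simp
  have P1: "S * X * S = S" using SX S by simp
  have P2: "X * S * X = X" using assoc_mult_mat[OF X S X] SX X by simp
  have P3: "mat_adjoint (S * X) = S * X" using SX by simp
  have P4: "mat_adjoint (X * S) = X * S"
  proof -
    have "mat_adjoint (X * S) = mat_adjoint S * mat_adjoint X" using adj_mult[OF X S] .
    also have "mat_adjoint X = N * S" unfolding X_def using adj_mult[OF SH N] NH by simp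
    also have "mat_adjoint S * (N * S) = X * S" unfolding X_def using assoc_mult_mat[OF SH N S] by simp
    finally show ?thesis .
  qed
  have uniq: "Y = X" if Y: "Y \<in> carrier_mat n m" and Y1: "S * Y * S = S" and Y4: "mat_adjoint (Y * S) = Y * S" for Y
  proof -
    have "mat_adjoint S = mat_adjoint (S * Y * S)" using Y1 by simp
    also have "\<dots> = mat_adjoint (S * (Y * S))" using assoc_mult_mat[OF S Y S] by simp
    also have "\<dots> = mat_adjoint (Y * S) * mat_adjoint S" using adj_mult[of S m n "Y * S" n] S Y by simp
    also have "\<dots> = (Y * S) * mat_adjoint S" using Y4 by simp
    finally have e: "mat_adjoint S = (Y * S) * mat_adjoint S" .
    have "X = ((Y * S) * mat_adjoint S) * N" unfolding X_def using e by simp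
    also have "\<dots> = Y * ((S * mat_adjoint S) * N)"
      using assoc_mult_mat[OF Y S SH] assoc_mult_mat[OF Y G N] by simp
    also have "\<dots> = Y" using GN Y by simp
    finally show ?thesis by simp
  qed
  have "pinv S = X" unfolding pinv_def
  proof (rule the_equality)
    show "X \<in> carrier_mat (dim_col S) (dim_row S) \<and> S * X * S = S \<and> X * S * X = X \<and>
      mat_adjoint (S * X) = S * X \<and> mat_adjoint (X * S) = X * S" using X S P1 P2 P3 P4 by simp
  next
    fix Y assume "Y \<in> carrier_mat (dim_col S) (dim_row S) \<and> S * Y * S = S \<and> Y * S * Y = Y \<and>
      mat_adjoint (S * Y) = S * Y \<and> mat_adjoint (Y * S) = Y * S"
    then show "Y = X" using uniq S by auto
  qed
  then show "S * pinv S = 1\<^sub>m m" "pinv S \<in> carrier_mat n m" using SX X by simp_all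
qed

lemma full_row_rank_adj_inj:
  fixes S :: "complex mat"
  assumes S: "S \<in> carrier_mat m n" and r: "vec_space.rank m S = m"
    and w: "w \<in> carrier_vec m" and z: "mat_adjoint S *\<^sub>v w = 0\<^sub>v n"
  shows "w = 0\<^sub>v m"
proof (rule ccontr)
  assume nz: "w \<noteq> 0\<^sub>v m"
  let ?w = "conjugate w"
  have cw: "?w \<in> carrier_vec m" using w by simp
  have nz': "?w \<noteq> 0\<^sub>v m" using nz by simp
  obtain ws where ws: "length ws \<le> m - 1" "set ws \<subseteq> carrier_vec m"
    "\<forall>x \<in> carrier_vec m. ?w \<bullet> x = 0 \<longrightarrow> (\<exists>c \<in> carrier_vec (length ws). x = mat_of_cols m ws *\<^sub>v c)"
    using row_kernel[OF cw nz'] by blast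
  have "vec_space.rank m S \<le> length ws"
  proof (rule rank_le_span[OF S mat_of_cols_carrier(1)])
    fix j assume j: "j < n"
    have "(mat_adjoint S *\<^sub>v w) $ j = 0" using z j by simp
    then have "(\<Sum>i<m. cnj (S $$ (i,j)) * w $ i) = 0"
      using S w j by (simp add: scalar_prod_def atLeast0LessThan)
    then have "cnj (\<Sum>i<m. cnj (S $$ (i,j)) * w $ i) = 0" by simp
    then have "?w \<bullet> col S j = 0"
      using S w j by (simp add: scalar_prod_def atLeast0LessThan cnj_sum mult.commute)
    then show "\<exists>y\<in>carrier_vec (length ws). col S j = mat_of_cols m ws *\<^sub>v y"
      using ws(3) S j by auto
  qed
  moreover have "m > 0"
  proof (rule ccontr)
    assume "\<not> m > 0"
    then have "w = 0\<^sub>v m" using w by (intro eq_vecI, auto)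
    then show False using nz by simp
  qed
  ultimately show False using ws(1) r by simp
qed



lemma ac_dims[simp]: "dim_row (append_cols A B) = dim_row A" "dim_col (append_cols A B) = dim_col A + dim_col B"
  unfolding append_cols_def by auto

lemma ac_carrier[simp]: "A \<in> carrier_mat n a \<Longrightarrow> B \<in> carrier_mat n b \<Longrightarrow> append_cols A B \<in> carrier_mat n (a + b)"
  unfolding append_cols_def by (intro carrier_matI, auto)

lemma ac_index:
  assumes "A \<in> carrier_mat n a" "B \<in> carrier_mat n b" "i < n" "j < a + b"
  shows "append_cols A B $$ (i,j) = (if j < a then A $$ (i,j) else B $$ (i, j - a))"
  using assms unfolding append_cols_def by auto

lemma ac_col:
  assumes A: "A \<in> carrier_mat n a" and B: "B \<in> carrier_mat n b" and j: "j < a + b"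
  shows "col (append_cols A B) j = (if j < a then col A j else col B (j - a))"
  by (rule eq_vecI, insert assms, auto simp: ac_index[OF A B] col_def)

lemma mult_ac:
  assumes M: "M \<in> carrier_mat m n" and A: "A \<in> carrier_mat n a" and B: "B \<in> carrier_mat n b"
  shows "M * append_cols A B = append_cols (M * A) (M * B)"
proof (rule eq_matI)
  fix i j assume i: "i < dim_row (append_cols (M * A) (M * B))" and j: "j < dim_col (append_cols (M * A) (M * B))"
  have d: "append_cols (M * A) (M * B) \<in> carrier_mat m (a + b)" using M A B by simp
  from i j d have i': "i < m" and j': "j < a + b" by auto
  show "(M * append_cols A B) $$ (i, j) = append_cols (M * A) (M * B) $$ (i, j)"
    using i' j' M A B
    by (simp add: ac_index[of "M * A" m a "M * B" b] ac_col[OF A B])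
qed (insert M A B, auto simp: carrier_matD)

lemma minus_ac:
  assumes "A \<in> carrier_mat n a" "B \<in> carrier_mat n b" "C \<in> carrier_mat n a" "D \<in> carrier_mat n b"
  shows "append_cols A B - append_cols C D = append_cols (A - C) (B - D)"
proof -
  have "append_cols A B - append_cols C D \<in> carrier_mat n (a+b)"
    using assms by (simp add: minus_carrier_mat)
  moreover have "append_cols (A - C) (B - D) \<in> carrier_mat n (a+b)"
    using assms by (simp add: minus_carrier_mat)
  ultimately show ?thesis
    by (intro eq_matI, insert assms, auto simp: ac_index[of _ n a _ b] minus_carrier_mat)
qed

lemma ac_zero:
  assumes A: "A \<in> carrier_mat n a" and B: "B \<in> carrier_mat n b"
    and z: "append_cols A B = 0\<^sub>m n (a + b)"
  shows "A = 0\<^sub>m n a" "B = 0\<^sub>m n b"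
proof -
  show "A = 0\<^sub>m n a"
  proof (rule eq_matI)
    fix i j assume "i < dim_row (0\<^sub>m n a :: complex mat)" "j < dim_col (0\<^sub>m n a :: complex mat)"
    then have ij: "i < n" "j < a" by auto
    have "append_cols A B $$ (i,j) = 0" using z ij by simp
    then show "A $$ (i,j) = 0\<^sub>m n a $$ (i,j)" using ij ac_index[OF A B, of i j] by simp
  qed (insert A, auto)
  show "B = 0\<^sub>m n b"
  proof (rule eq_matI)
    fix i j assume "i < dim_row (0\<^sub>m n b :: complex mat)" "j < dim_col (0\<^sub>m n b :: complex mat)"
    then have ij: "i < n" "j < b" by auto
    have "append_cols A B $$ (i,j + a) = 0" using z ij by simp
    then show "B $$ (i,j) = 0\<^sub>m n b $$ (i,j)" using ij ac_index[OF A B, of i "j + a"] by simp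
  qed (insert B, auto)
qed

lemma ac_ar_mult:
  assumes H: "H \<in> carrier_mat n u" and J: "J \<in> carrier_mat n k"
    and A: "A \<in> carrier_mat u d" and B: "B \<in> carrier_mat k d"
  shows "append_cols H J * (A @\<^sub>r B) = H * A + J * B"
proof -
  have "append_cols H J * (A @\<^sub>r B) =
    four_block_mat H J (0\<^sub>m 0 u) (0\<^sub>m 0 k) * four_block_mat A (0\<^sub>m u 0) B (0\<^sub>m k 0)"
    unfolding append_cols_def append_rows_def using H J A B by simp
  also have "\<dots> = four_block_mat (H * A + J * B) (H * 0\<^sub>m u 0 + J * 0\<^sub>m k 0)
     (0\<^sub>m 0 u * A + 0\<^sub>m 0 k * B) (0\<^sub>m 0 u * 0\<^sub>m u 0 + 0\<^sub>m 0 k * 0\<^sub>m k 0)"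
    by (rule mult_four_block_mat[OF H J _ _ A _ B], auto)
  also have "\<dots> = H * A + J * B"
    by (rule eq_matI, insert H J A B, auto)
  finally show ?thesis .
qed

lemma frob_nonneg: "frob_sq A \<ge> 0"
  unfolding frob_sq_def by (intro sum_nonneg, auto)

lemma frob_zero:
  assumes A: "A \<in> carrier_mat n m" and f: "frob_sq A \<le> 0"
  shows "A = 0\<^sub>m n m"
proof -
  have "frob_sq A = 0" using f frob_nonneg[of A] by simp
  then have "\<forall>i\<in>{..<n}. (\<Sum>j<m. (cmod (A $$ (i, j)))\<^sup>2) = 0"
    unfolding frob_sq_def using A by (subst sum_nonneg_eq_0_iff[symmetric], auto intro: sum_nonneg)
  then have "\<forall>i<n. \<forall>j<m. (cmod (A $$ (i, j)))\<^sup>2 = 0"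
    by (auto simp: sum_nonneg_eq_0_iff)
  then show ?thesis using A by (intro eq_matI, auto)
qed

lemma frob_zero_mat[simp]: "frob_sq (0\<^sub>m n m) = 0"
  unfolding frob_sq_def by simp



lemma lin_sub_zero:
  fixes A B :: "complex mat"
  assumes "A \<in> carrier_mat n m" "B \<in> carrier_mat n m" "A - B = 0\<^sub>m n m"
  shows "A = B"
proof (rule eq_matI)
  fix i j assume "i < dim_row B" "j < dim_col B"
  then have ij: "i < n" "j < m" using assms by auto
  have "(A - B) $$ (i,j) = 0" using assms(3) ij by simp
  moreover have "(A - B) $$ (i,j) = A $$ (i,j) - B $$ (i,j)" using assms(1,2) ij by auto
  ultimately show "A $$ (i,j) = B $$ (i,j)" by simp
qed (insert assms, auto)

lemma minus_zero_mat_r[simp]: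
  fixes A :: "complex mat"
  shows "A \<in> carrier_mat n m \<Longrightarrow> A - 0\<^sub>m n m = A"
  by (rule eq_matI, auto)

lemma vec_sub_zero:
  fixes a b :: "complex vec"
  assumes "a \<in> carrier_vec n" "b \<in> carrier_vec n" "a - b = 0\<^sub>v n"
  shows "a = b"
proof (rule eq_vecI)
  fix i assume "i < dim_vec b"
  then have i: "i < n" using assms by auto
  have "(a - b) $ i = 0" using assms(3) i by simp
  moreover have "(a - b) $ i = a $ i - b $ i" using assms(1,2) i by auto
  ultimately show "a $ i = b $ i" by simp
qed (insert assms, auto)

lemma zero_mat_mult_vec[simp]:
  fixes x :: "complex vec"
  shows "x \<in> carrier_vec m \<Longrightarrow> 0\<^sub>m n m *\<^sub>v x = 0\<^sub>v n"
  by (rule eq_vecI, auto simp: scalar_prod_def)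

lemma P0_props:
  fixes J :: "complex mat"
  assumes J: "J \<in> carrier_mat B I"
    and inj: "\<And>v. v \<in> carrier_vec I \<Longrightarrow> J *\<^sub>v v = 0\<^sub>v B \<Longrightarrow> v = 0\<^sub>v I"
  shows "1\<^sub>m B - J * pinv J \<in> orth_projs B (B - I)" "(1\<^sub>m B - J * pinv J) * J = 0\<^sub>m B I"
proof -
  obtain Nj where Nj: "Nj \<in> carrier_mat I I" and NjH: "mat_adjoint Nj = Nj"
    and GN: "(mat_adjoint J * J) * Nj = 1\<^sub>m I" and NG: "Nj * (mat_adjoint J * J) = 1\<^sub>m I"
    and pJ: "pinv J = Nj * mat_adjoint J"
    using pinv_inj[OF J inj] by blast
  have JH: "mat_adjoint J \<in> carrier_mat I B" using J by simp
  define Z where "Z = Nj * mat_adjoint J"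
  have Z: "Z \<in> carrier_mat I B" unfolding Z_def using mult_carrier_mat[OF Nj JH] .
  have ZJ: "Z * J = 1\<^sub>m I" unfolding Z_def using NG assoc_mult_mat[OF Nj JH J] by simp
  define Q0 where "Q0 = J * Z"
  have Q0: "Q0 \<in> carrier_mat B B" unfolding Q0_def using mult_carrier_mat[OF J Z] .
  have Q0J: "Q0 * J = J" unfolding Q0_def using ZJ J Z by simp
  have Q0Q0: "Q0 * Q0 = Q0"
  proof -
    have "Q0 * Q0 = J * (Z * (J * Z))" unfolding Q0_def using assoc_mult_mat[OF J Z mult_carrier_mat[OF J Z]] .
    also have "Z * (J * Z) = (Z * J) * Z" using assoc_mult_mat[OF Z J Z] by simp
    finally show ?thesis using ZJ Z unfolding Q0_def by simp
  qed
  have Q0H: "mat_adjoint Q0 = Q0"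
  proof -
    have "mat_adjoint Q0 = mat_adjoint Z * mat_adjoint J" unfolding Q0_def using adj_mult[OF J Z] .
    also have "mat_adjoint Z = J * Nj" unfolding Z_def using adj_mult[OF Nj JH] NjH by simp
    finally show ?thesis unfolding Q0_def Z_def using J Nj JH by simp
  qed
  define P0 where "P0 = 1\<^sub>m B - Q0"
  have P0: "P0 \<in> carrier_mat B B" unfolding P0_def using Q0 by (simp add: minus_carrier_mat)
  have P0J: "P0 * J = 0\<^sub>m B I"
    unfolding P0_def using minus_mult_distrib_mat[OF one_carrier_mat Q0 J] Q0J J by simp
  have P0P0: "P0 * P0 = P0"
  proof -
    have "P0 * P0 = 1\<^sub>m B * P0 - Q0 * P0" unfolding P0_def[of] 
      using minus_mult_distrib_mat[OF one_carrier_mat Q0 P0] P0_def by simp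
    also have "Q0 * P0 = Q0 - Q0 * Q0" unfolding P0_def
      using mult_minus_distrib_mat[OF Q0 one_carrier_mat Q0] Q0 by simp
    also have "\<dots> = 0\<^sub>m B B" using Q0Q0 Q0 by simp
    finally show ?thesis using P0 by simp
  qed
  have P0H: "mat_adjoint P0 = P0" unfolding P0_def using adj_minus[OF one_carrier_mat Q0] Q0H by simp
  have ker: "mat_kernel P0 = vec_space.col_space B J"
  proof -
    have "mat_kernel P0 = {y \<in> carrier_vec B. \<exists>x\<in>carrier_vec I. J *\<^sub>v x = y}"
    proof (rule subset_antisym; rule subsetI)
      fix v assume "v \<in> mat_kernel P0"
      then have v: "v \<in> carrier_vec B" "P0 *\<^sub>v v = 0\<^sub>v B" unfolding mat_kernel_def using P0 by auto
      have "v - Q0 *\<^sub>v v = 0\<^sub>v B"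
        using v minus_mult_distrib_mat_vec[OF one_carrier_mat Q0 v(1)] unfolding P0_def by simp
      then have "v = Q0 *\<^sub>v v" by (rule vec_sub_zero[OF v(1) mult_mat_vec_carrier[OF Q0 v(1)]])
      also have "\<dots> = J *\<^sub>v (Z *\<^sub>v v)" unfolding Q0_def using J Z v by simp
      finally have "J *\<^sub>v (Z *\<^sub>v v) = v" by simp
      moreover have "Z *\<^sub>v v \<in> carrier_vec I" using Z v by simp
      ultimately show "v \<in> {y \<in> carrier_vec B. \<exists>x\<in>carrier_vec I. J *\<^sub>v x = y}" using v by blast
    next
      fix v assume "v \<in> {y \<in> carrier_vec B. \<exists>x\<in>carrier_vec I. J *\<^sub>v x = y}"
      then obtain x where x: "x \<in> carrier_vec I" "v = J *\<^sub>v x" by auto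
      have "P0 *\<^sub>v v = (P0 * J) *\<^sub>v x" using x P0 J by simp
      then have "P0 *\<^sub>v v = 0\<^sub>v B" using P0J x by simp
      then show "v \<in> mat_kernel P0" unfolding mat_kernel_def using P0 x J by auto
    qed
    then show ?thesis using vec_space.col_space_eq[OF J] J by simp
  qed
  have rJ: "vec_space.rank B J = I" using inj_full_rank[OF J inj] .
  have "vec_space.rank B P0 + vec_space.rank B J = B"
    using rank_nullity_sq[OF P0] unfolding ker vec_space.rank_def vec_space.col_space_def .
  then have "vec_space.rank B P0 = B - I" using rJ by simp
  then have "P0 \<in> orth_projs B (B - I)" unfolding orth_projs_def mrank_def using P0 P0P0 P0H by simp
  then show "1\<^sub>m B - J * pinv J \<in> orth_projs B (B - I)" "(1\<^sub>m B - J * pinv J) * J = 0\<^sub>m B I"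
    using P0J unfolding P0_def Q0_def Z_def pJ by auto
qed



lemma mat_mult_zero_vec[simp]:
  fixes A :: "complex mat"
  shows "A \<in> carrier_mat n m \<Longrightarrow> A *\<^sub>v 0\<^sub>v m = 0\<^sub>v n"
  by (rule eq_vecI, auto simp: scalar_prod_def)

lemma proj_kernel:
  fixes P :: "complex mat"
  assumes P: "P \<in> orth_projs B (B - I)" and IB: "I \<le> B"
  shows "\<exists>Q \<in> carrier_mat B I. \<forall>x \<in> carrier_vec B. P *\<^sub>v x = 0\<^sub>v B \<longrightarrow> (\<exists>c \<in> carrier_vec I. x = Q *\<^sub>v c)"
proof -
  have Pc: "P \<in> carrier_mat B B" and r: "vec_space.rank B P = B - I"
    using P unfolding orth_projs_def mrank_def by auto
  obtain ws where ws: "length ws = B - vec_space.rank B P" "set ws \<subseteq> carrier_vec B"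
     "\<forall>x \<in> carrier_vec B. P *\<^sub>v x = 0\<^sub>v B \<longrightarrow> (\<exists>c \<in> carrier_vec (length ws). x = mat_of_cols B ws *\<^sub>v c)"
    using kernel_span[OF Pc] by blast
  have "length ws = I" using ws(1) r IB by simp
  then show ?thesis using ws(3) mat_of_cols_carrier(1)[of B ws] by metis
qed

lemma rank_M_bound:
  fixes P Q HJ L M :: "complex mat"
  assumes P: "P \<in> carrier_mat B B" and Q: "Q \<in> carrier_mat B I"
    and kerQ: "\<forall>x \<in> carrier_vec B. P *\<^sub>v x = 0\<^sub>v B \<longrightarrow> (\<exists>c \<in> carrier_vec I. x = Q *\<^sub>v c)"
    and HJ: "HJ \<in> carrier_mat B n" and L: "L \<in> carrier_mat n B" and LHJ: "L * HJ = 1\<^sub>m n"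
    and M: "M \<in> carrier_mat n d" and z: "P * (HJ * M) = 0\<^sub>m B d"
  shows "vec_space.rank n M \<le> I"
proof (rule rank_le_span[OF M mult_carrier_mat[OF L Q]])
  fix j assume j: "j < d"
  have cM: "col M j \<in> carrier_vec n" using M j by simp
  have "P *\<^sub>v (HJ *\<^sub>v col M j) = col (P * (HJ * M)) j"
    using col_mult2[OF P mult_carrier_mat[OF HJ M] j] col_mult2[OF HJ M j] by simp
  also have "\<dots> = 0\<^sub>v B" using z j by simp
  finally obtain c where c: "c \<in> carrier_vec I" "HJ *\<^sub>v col M j = Q *\<^sub>v c"
    using kerQ HJ cM by (meson mult_mat_vec_carrier)
  have "col M j = (L * HJ) *\<^sub>v col M j" using LHJ cM by simp
  also have "\<dots> = L *\<^sub>v (HJ *\<^sub>v col M j)" using L HJ cM by simp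
  also have "\<dots> = (L * Q) *\<^sub>v c" using c L Q by simp
  finally show "\<exists>y\<in>carrier_vec I. col M j = L * Q *\<^sub>v y" using c by blast
qed

lemma P_final:
  fixes P Q J :: "complex mat"
  assumes P: "P \<in> carrier_mat B B" and PH: "mat_adjoint P = P"
    and Q: "Q \<in> carrier_mat B I"
    and kerQ: "\<forall>x \<in> carrier_vec B. P *\<^sub>v x = 0\<^sub>v B \<longrightarrow> (\<exists>c \<in> carrier_vec I. x = Q *\<^sub>v c)"
    and PP: "P * P = P"
    and J: "J \<in> carrier_mat B I"
    and inj: "\<And>v. v \<in> carrier_vec I \<Longrightarrow> J *\<^sub>v v = 0\<^sub>v B \<Longrightarrow> v = 0\<^sub>v I"
    and PJ: "P * J = 0\<^sub>m B I"
  shows "P = 1\<^sub>m B - J * pinv J"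
proof -
  obtain Nj where Nj: "Nj \<in> carrier_mat I I" and NjH: "mat_adjoint Nj = Nj"
    and GN: "(mat_adjoint J * J) * Nj = 1\<^sub>m I" and NG: "Nj * (mat_adjoint J * J) = 1\<^sub>m I"
    and pJ: "pinv J = Nj * mat_adjoint J"
    using pinv_inj[OF J inj] by blast
  have JH: "mat_adjoint J \<in> carrier_mat I B" using J by simp
  define Z where "Z = Nj * mat_adjoint J"
  have Z: "Z \<in> carrier_mat I B" unfolding Z_def using mult_carrier_mat[OF Nj JH] .
  have ZJ: "Z * J = 1\<^sub>m I" unfolding Z_def using NG assoc_mult_mat[OF Nj JH J] by simp
  have JZH: "mat_adjoint (J * Z) = J * Z"
  proof -
    have "mat_adjoint (J * Z) = mat_adjoint Z * mat_adjoint J" using adj_mult[OF J Z] .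
    also have "mat_adjoint Z = J * Nj" unfolding Z_def using adj_mult[OF Nj JH] NjH by simp
    finally show ?thesis unfolding Z_def using J Nj JH by simp
  qed
  define G where "G = 1\<^sub>m B - P"
  have G: "G \<in> carrier_mat B B" unfolding G_def using P by (simp add: minus_carrier_mat)
  have GH: "mat_adjoint G = G" unfolding G_def using adj_minus[OF one_carrier_mat P] PH by simp
  have GJ: "G * J = J" unfolding G_def using minus_mult_distrib_mat[OF one_carrier_mat P J] PJ J by simp
  have PG: "P * G = 0\<^sub>m B B" unfolding G_def using mult_minus_distrib_mat[OF P one_carrier_mat P] PP P by simp
  \<comment> \<open>G factors through Q\<close>
  have colG: "\<forall>j<B. \<exists>c \<in> carrier_vec I. col G j = Q *\<^sub>v c"
  proof (intro allI impI)
    fix j assume j: "j < B"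
    have "P *\<^sub>v col G j = col (P * G) j" using col_mult2[OF P G j] by simp
    also have "\<dots> = 0\<^sub>v B" using PG j by simp
    finally have z: "P *\<^sub>v col G j = 0\<^sub>v B" .
    have cG: "col G j \<in> carrier_vec B" using G j by simp
    from kerQ cG z show "\<exists>c \<in> carrier_vec I. col G j = Q *\<^sub>v c" by blast
  qed
  define Kg where "Kg = mat I B (\<lambda>(i,j). (SOME c. c \<in> carrier_vec I \<and> col G j = Q *\<^sub>v c) $ i)"
  have Kg: "Kg \<in> carrier_mat I B" unfolding Kg_def by simp
  have GQK: "G = Q * Kg"
  proof (rule mat_col_eqI)
    fix j assume "j < dim_col (Q * Kg)"
    then have j: "j < B" using Kg by simp
    let ?c = "SOME c. c \<in> carrier_vec I \<and> col G j = Q *\<^sub>v c"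
    have ex: "\<exists>c. c \<in> carrier_vec I \<and> col G j = Q *\<^sub>v c" using colG j by blast
    have c: "?c \<in> carrier_vec I \<and> col G j = Q *\<^sub>v ?c" by (rule someI_ex[OF ex])
    have "col Kg j = ?c"
    proof (rule eq_vecI)
      have cd: "dim_vec ?c = I" using c carrier_vecD by blast
      show "dim_vec (col Kg j) = dim_vec ?c" using cd Kg by simp
      fix i assume "i < dim_vec ?c"
      then have i: "i < I" using c carrier_vecD by metis
      show "col Kg j $ i = ?c $ i" unfolding Kg_def using i j by simp
    qed
    then have "col (Q * Kg) j = Q *\<^sub>v ?c" using col_mult2[OF Q Kg j] by simp
    then show "col G j = col (Q * Kg) j" using c by simp
  qed (insert G Q Kg, auto)
  have KJ: "Kg * J \<in> carrier_mat I I" using Kg J by simp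
  have JQ: "J = Q * (Kg * J)" using GJ GQK Q Kg J by simp
  have "\<exists>N2 \<in> carrier_mat I I. (Kg * J) * N2 = 1\<^sub>m I \<and> N2 * (Kg * J) = 1\<^sub>m I"
  proof (rule inj_sq_inverse[OF KJ])
    fix v assume v: "v \<in> carrier_vec I" "(Kg * J) *\<^sub>v v = 0\<^sub>v I"
    have "J *\<^sub>v v = (Q * (Kg * J)) *\<^sub>v v" using JQ by simp
    also have "\<dots> = Q *\<^sub>v ((Kg * J) *\<^sub>v v)" using assoc_mult_mat_vec[OF Q KJ v(1)] .
    finally have "J *\<^sub>v v = Q *\<^sub>v ((Kg * J) *\<^sub>v v)" .
    then have "J *\<^sub>v v = 0\<^sub>v B" using v Q by simp
    then show "v = 0\<^sub>v I" using inj v by simp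
  qed
  then obtain N2 where N2: "N2 \<in> carrier_mat I I" and KN: "(Kg * J) * N2 = 1\<^sub>m I" by blast
  have QJ: "Q = J * N2"
  proof -
    have "J * N2 = (Q * (Kg * J)) * N2" using JQ by simp
    also have "\<dots> = Q * ((Kg * J) * N2)" using assoc_mult_mat[OF Q KJ N2] .
    finally have "J * N2 = Q * ((Kg * J) * N2)" .
    then show ?thesis using KN Q by simp
  qed
  have GJW: "G = J * (N2 * Kg)" using GQK QJ J N2 Kg by simp
  have JZG: "(J * Z) * G = G"
  proof -
    have W: "N2 * Kg \<in> carrier_mat I B" using N2 Kg by simp
    have "(J * Z) * G = J * (Z * (J * (N2 * Kg)))" unfolding GJW using assoc_mult_mat[OF J Z mult_carrier_mat[OF J W]] .
    also have "Z * (J * (N2 * Kg)) = (Z * J) * (N2 * Kg)" using assoc_mult_mat[OF Z J W] by simp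
    finally have "(J * Z) * G = J * ((Z * J) * (N2 * Kg))" .
    then show ?thesis using ZJ GJW N2 Kg by simp
  qed
  have "G = mat_adjoint G" using GH by simp
  also have "\<dots> = mat_adjoint ((J * Z) * G)" using JZG by simp
  also have "\<dots> = mat_adjoint G * mat_adjoint (J * Z)" using adj_mult[OF mult_carrier_mat[OF J Z] G] .
  also have "\<dots> = G * (J * Z)" using GH JZH by simp
  also have "\<dots> = (G * J) * Z" using G J Z by simp
  also have "\<dots> = J * Z" using GJ by simp
  finally have "G = J * Z" .
  moreover have "1\<^sub>m B - G = P" unfolding G_def using P by (intro eq_matI, auto)
  ultimately have "P = 1\<^sub>m B - J * Z" by simp
  then show ?thesis using pJ Z_def by simp
qed



lemma rank_le_span2:
  fixes A :: "complex mat"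
  assumes A: "A \<in> carrier_mat n a" and ws: "set ws \<subseteq> carrier_vec n"
    and cols: "\<And>j. j < a \<Longrightarrow> col A j \<in> LinearCombinations.module.span class_ring (module_vec TYPE(complex) n) (set ws)"
  shows "vec_space.rank n A \<le> length ws"
proof (rule rank_le_span[OF A mat_of_cols_carrier(1)])
  fix j assume j: "j < a"
  have "col A j \<in> vec_space.col_space n (mat_of_cols n ws)"
    unfolding vec_space.col_space_def cols_mat_of_cols[OF ws] using cols[OF j] .
  then show "\<exists>y\<in>carrier_vec (length ws). col A j = mat_of_cols n ws *\<^sub>v y"
    unfolding vec_space.col_space_eq[OF mat_of_cols_carrier(1)] by (auto intro: sym)
qed

lemma zero_append_moc:
  fixes ws :: "complex vec list"
  assumes ws: "set ws \<subseteq> carrier_vec I" and c: "c \<in> carrier_vec (length ws)"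
  shows "0\<^sub>v U @\<^sub>v (mat_of_cols I ws *\<^sub>v c) = mat_of_cols (U + I) (map (\<lambda>w. 0\<^sub>v U @\<^sub>v w) ws) *\<^sub>v c"
proof (rule eq_vecI)
  have wd: "\<And>l. l < length ws \<Longrightarrow> dim_vec (ws ! l) = I" using ws by (meson carrier_vecD nth_mem subsetD)
  fix r assume "r < dim_vec (mat_of_cols (U + I) (map (\<lambda>w. 0\<^sub>v U @\<^sub>v w) ws) *\<^sub>v c)"
  then have r: "r < U + I" by simp
  show "(0\<^sub>v U @\<^sub>v (mat_of_cols I ws *\<^sub>v c)) $ r = (mat_of_cols (U + I) (map (\<lambda>w. 0\<^sub>v U @\<^sub>v w) ws) *\<^sub>v c) $ r"
    using r c wd by (auto simp: mat_of_cols_def scalar_prod_def row_def intro!: sum.cong)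
qed simp

lemma col_append_rows:
  fixes A B :: "complex mat"
  assumes A: "A \<in> carrier_mat a d" and B: "B \<in> carrier_mat b d" and j: "j < d"
  shows "col (A @\<^sub>r B) j = col A j @\<^sub>v col B j"
  by (rule eq_vecI, insert assms, auto simp: append_rows_def col_def)

lemma qpsk_neg: "q \<in> qpsk \<Longrightarrow> - q \<in> qpsk"
proof -
  assume "q \<in> qpsk"
  then obtain a b where ab: "q = (complex_of_real a + \<i> * complex_of_real b) / complex_of_real (sqrt 2)"
    "a \<in> {-1, 1}" "b \<in> {-1, 1}" unfolding qpsk_def by blast
  have "- q = (complex_of_real (-a) + \<i> * complex_of_real (-b)) / complex_of_real (sqrt 2)"
    using ab(1) by (simp add: field_simps)
  moreover have "-a \<in> {-1, 1}" "-b \<in> {-1,1}" using ab by auto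
  ultimately show ?thesis unfolding qpsk_def by blast
qed

lemma qpsk_nz: "q \<in> qpsk \<Longrightarrow> q \<noteq> 0"
proof -
  assume "q \<in> qpsk"
  then obtain a b where ab: "q = (complex_of_real a + \<i> * complex_of_real b) / complex_of_real (sqrt 2)"
    "a \<in> {-1, 1}" "b \<in> {-1, 1}" unfolding qpsk_def by blast
  have "Re q = a / sqrt 2" using ab(1) by (simp add: Re_divide_of_real)
  moreover have "a \<noteq> 0" using ab(2) by auto
  ultimately have "Re q \<noteq> 0" by simp
  then show ?thesis by auto
qed

lemma col_minus_mat:
  fixes A B :: "complex mat"
  assumes "A \<in> carrier_mat n m" "B \<in> carrier_mat n m" "j < m"
  shows "col (A - B) j = col A j - col B j"
  by (rule eq_vecI, insert assms, auto)

lemma eclipse_construct: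
  fixes S_T S_D W_T W_D R :: "complex mat"
  assumes U: "U > 0" and Dp: "D > 0" and S_D: "S_D \<in> qpsk_mats U D"
    and W_T: "W_T \<in> carrier_mat I T" and W_D: "W_D \<in> carrier_mat I D"
    and Zs: "pinv S_T \<in> carrier_mat T U"
    and R: "R \<in> carrier_mat B I"
    and RX: "R * (W_D - W_T * pinv S_T * S_D) = 0\<^sub>m B D"
    and Rnz: "R \<noteq> 0\<^sub>m B I"
  shows "eclipsed_ce U D I S_T S_D W_T W_D"
proof -
  define K where "K = W_T * pinv S_T"
  have K: "K \<in> carrier_mat I U" unfolding K_def using W_T Zs by simp
  have SD: "S_D \<in> carrier_mat U D" using S_D unfolding qpsk_mats_def by simp
  define X where "X = W_D - K * S_D"
  have X: "X \<in> carrier_mat I D" unfolding X_def using W_D K SD by (simp add: minus_carrier_mat)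
  have RX': "R * X = 0\<^sub>m B D" using RX unfolding X_def K_def .
  obtain a m where am: "a < B" "m < I" "R $$ (a, m) \<noteq> 0"
  proof -
    have "\<exists>a m. a < B \<and> m < I \<and> R $$ (a,m) \<noteq> 0"
    proof (rule ccontr)
      assume "\<not> ?thesis"
      then have "R = 0\<^sub>m B I" using R by (intro eq_matI, auto)
      then show False using Rnz by simp
    qed
    then show ?thesis using that by blast
  qed
  define k where "k = row R a"
  have k: "k \<in> carrier_vec I" unfolding k_def using R by (simp add: row_def carrier_vecI)
  have knz: "k \<noteq> 0\<^sub>v I"
  proof
    assume "k = 0\<^sub>v I"
    then have "k $ m = 0" using am by simp
    then show False using am R unfolding k_def by simp
  qed
  have kX: "k \<bullet> col X j = 0" if j: "j < D" for j
  proof -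
    have "(R * X) $$ (a, j) = 0" using RX' am j by simp
    then show ?thesis unfolding k_def using R X am j by simp
  qed
  obtain ws where ws: "length ws \<le> I - 1" "set ws \<subseteq> carrier_vec I"
    "\<forall>x \<in> carrier_vec I. k \<bullet> x = 0 \<longrightarrow> (\<exists>c \<in> carrier_vec (length ws). x = mat_of_cols I ws *\<^sub>v c)"
    using row_kernel[OF k knz] by blast
  define s0 where "s0 = S_D $$ (0,0)"
  have s0: "s0 \<in> qpsk" using S_D U Dp unfolding qpsk_mats_def s0_def by auto
  define St where "St = mat U D (\<lambda>(i,j). if i = 0 \<and> j = 0 then - s0 else S_D $$ (i,j))"
  have St: "St \<in> carrier_mat U D" unfolding St_def by simp
  have Stq: "St \<in> qpsk_mats U D"
    unfolding qpsk_mats_def St_def using S_D s0 qpsk_neg unfolding qpsk_mats_def by auto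
  have Stne: "St \<noteq> S_D"
  proof
    assume "St = S_D"
    then have "St $$ (0,0) = s0" unfolding s0_def by simp
    moreover have "St $$ (0,0) = - s0" unfolding St_def using U Dp by simp
    ultimately have "s0 = 0" by simp
    then show False using qpsk_nz[OF s0] by simp
  qed
  define M' where "M' = (S_D - St) @\<^sub>r (W_D - K * St)"
  have A1: "S_D - St \<in> carrier_mat U D" using St by (simp add: minus_carrier_mat)
  have A2: "W_D - K * St \<in> carrier_mat I D" using W_D K St by (simp add: minus_carrier_mat)
  have M': "M' \<in> carrier_mat (U + I) D" unfolding M'_def using A1 A2 by simp
  define ws3 where "ws3 = map (\<lambda>w. 0\<^sub>v U @\<^sub>v w) ws"
  define ws4 where "ws4 = ws3 @ [col M' 0]"
  have ws3c: "set ws3 \<subseteq> carrier_vec (U + I)" unfolding ws3_def using ws(2) by auto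
  have ws4c: "set ws4 \<subseteq> carrier_vec (U + I)" unfolding ws4_def using ws3c M' Dp by auto
  interpret V: vec_space "TYPE(complex)" "U + I" .
  have "vec_space.rank (U + I) M' \<le> length ws4"
  proof (rule rank_le_span2[OF M' ws4c])
    fix j assume j: "j < D"
    show "col M' j \<in> V.span (set ws4)"
    proof (cases "j = 0")
      case True
      have "col M' j \<in> set ws4" unfolding ws4_def True by simp
      then show ?thesis using V.in_own_span[OF ws4c] by blast
    next
      case False
      have c1: "col (S_D - St) j = 0\<^sub>v U"
        by (rule eq_vecI, insert False j SD St, auto simp: St_def)
      have cSt: "col St j = col S_D j"
        by (rule eq_vecI, insert False j SD St, auto simp: St_def)
      have "col (W_D - K * St) j = col W_D j - K *\<^sub>v col St j"
        using col_minus_mat[OF W_D mult_carrier_mat[OF K St] j] col_mult2[OF K St j] by simp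
      also have "\<dots> = col X j" unfolding X_def cSt
        using col_minus_mat[OF W_D mult_carrier_mat[OF K SD] j] col_mult2[OF K SD j] by simp
      finally have c2: "col (W_D - K * St) j = col X j" .
      obtain c where c: "c \<in> carrier_vec (length ws)" "col X j = mat_of_cols I ws *\<^sub>v c"
      proof -
        have cX: "col X j \<in> carrier_vec I" using X j by simp
        show ?thesis using ws(3) kX[OF j] cX that by blast
      qed
      have "col M' j = 0\<^sub>v U @\<^sub>v (mat_of_cols I ws *\<^sub>v c)"
        unfolding M'_def col_append_rows[OF A1 A2 j] c1 c2 c(2) ..
      also have "\<dots> = mat_of_cols (U + I) ws3 *\<^sub>v c"
        unfolding ws3_def by (rule zero_append_moc[OF ws(2) c(1)])
      finally have e: "col M' j = mat_of_cols (U + I) ws3 *\<^sub>v c" .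
      have "col M' j \<in> V.col_space (mat_of_cols (U + I) ws3)"
        unfolding V.col_space_eq[OF mat_of_cols_carrier(1)] e using c(1)
          mult_mat_vec_carrier[OF mat_of_cols_carrier(1)[of "U + I" ws3], of c] unfolding ws3_def by auto
      then have "col M' j \<in> V.span (set ws3)"
        unfolding V.col_space_def cols_mat_of_cols[OF ws3c] .
      moreover have "V.span (set ws3) \<subseteq> V.span (set ws4)"
        by (rule V.span_is_monotone, auto simp: ws4_def)
      ultimately show ?thesis by blast
    qed
  qed
  moreover have "length ws4 \<le> I" unfolding ws4_def ws3_def using ws(1) am(2) by simp
  ultimately have "mrank M' \<le> I" unfolding mrank_def using M' by simp
  then show ?thesis unfolding eclipsed_ce_def M'_def K_def using Stq Stne by blast
qed



lemma lin2:
  fixes A C :: "complex mat"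
  assumes "A \<in> carrier_mat n m" "C \<in> carrier_mat n m"
  shows "A + C + 0\<^sub>m n m - A = C"
  by (rule eq_matI, insert assms, auto)

lemma lin4:
  fixes b1 b2 c1 c2 :: "complex mat"
  assumes "b1 \<in> carrier_mat n m" "b2 \<in> carrier_mat n m" "c1 \<in> carrier_mat n m" "c2 \<in> carrier_mat n m"
    and "b1 + b2 = c1 + c2"
  shows "(b1 - c1) + (b2 - c2) = 0\<^sub>m n m"
proof (rule eq_matI)
  fix i j assume "i < dim_row (0\<^sub>m n m :: complex mat)" "j < dim_col (0\<^sub>m n m :: complex mat)"
  then have ij: "i < n" "j < m" by auto
  have "(b1 + b2) $$ (i,j) = (c1 + c2) $$ (i,j)" using assms(5) by simp
  then have h: "b1 $$ (i,j) + b2 $$ (i,j) = c1 $$ (i,j) + c2 $$ (i,j)" using assms(1-4) ij by simp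
  have "b1 $$ (i,j) - c1 $$ (i,j) + (b2 $$ (i,j) - c2 $$ (i,j)) = (b1 $$ (i,j) + b2 $$ (i,j)) - (c1 $$ (i,j) + c2 $$ (i,j))"
    by (simp add: algebra_simps)
  then have "b1 $$ (i,j) - c1 $$ (i,j) + (b2 $$ (i,j) - c2 $$ (i,j)) = 0" using h by simp
  then show "((b1 - c1) + (b2 - c2)) $$ (i,j) = 0\<^sub>m n m $$ (i,j)" using assms(1-4) ij by simp
qed (insert assms, auto)

lemma ac_zero_zero: "append_cols (0\<^sub>m n a) (0\<^sub>m n b) = (0\<^sub>m n (a + b) :: complex mat)"
  by (rule eq_matI, auto simp: ac_index[of _ n a _ b])

theorem theorem6:
  fixes B U I T D :: nat
    and H J S_T S_D W_T W_D N_T N_D Y_T Y_D :: "complex mat"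
  assumes pos: "B > 0" "U > 0" "I > 0" "T > 0" "D > 0"
    and dimBUI: "B \<ge> U + I" and dimTU: "T \<ge> U"
    and H: "H \<in> carrier_mat B U" and J: "J \<in> carrier_mat B I"
    and HJ_rank: "mrank (append_cols H J) = U + I"
    and S_T: "S_T \<in> carrier_mat U T" and S_T_rank: "mrank S_T = U"
    and S_D: "S_D \<in> qpsk_mats U D"
    and W_T: "W_T \<in> carrier_mat I T" and W_D: "W_D \<in> carrier_mat I D"
    and N_T: "N_T = 0\<^sub>m B T" and N_D: "N_D = 0\<^sub>m B D"
    and Y_T: "Y_T = H * S_T + J * W_T + N_T"
    and Y_D: "Y_D = H * S_D + J * W_D + N_D"
    and not_eclipsed: "\<not> eclipsed_ce U D I S_T S_D W_T W_D"
  shows "(\<exists>P Ht St. is_jml_minimizer B U I D Y_T Y_D S_T P Ht St) \<and>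
         (\<forall>P Ht St. is_jml_minimizer B U I D Y_T Y_D S_T P Ht St \<longrightarrow>
            P = 1\<^sub>m B - J * pinv J \<and> P * Ht = P * H \<and> St = S_D)"
proof -
  have SDc: "S_D \<in> carrier_mat U D" using S_D unfolding qpsk_mats_def by simp
  have YT: "Y_T = H * S_T + J * W_T + 0\<^sub>m B T" using Y_T N_T by simp
  have YD: "Y_D = H * S_D + J * W_D + 0\<^sub>m B D" using Y_D N_D by simp
  have YTc: "Y_T \<in> carrier_mat B T" unfolding YT using H S_T J W_T by simp
  have YDc: "Y_D \<in> carrier_mat B D" unfolding YD using H SDc J W_D by simp
  define HJ where "HJ = append_cols H J"
  have HJc: "HJ \<in> carrier_mat B (U + I)" unfolding HJ_def using H J by simp
  have HJr: "vec_space.rank B HJ = U + I" using HJ_rank H unfolding mrank_def HJ_def by simp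
  have HJinj: "\<And>v. v \<in> carrier_vec (U + I) \<Longrightarrow> HJ *\<^sub>v v = 0\<^sub>v B \<Longrightarrow> v = 0\<^sub>v (U + I)"
    using full_rank_inj[OF HJc HJr] by blast
  obtain NH where NH: "NH \<in> carrier_mat (U + I) (U + I)" and NHG: "NH * (mat_adjoint HJ * HJ) = 1\<^sub>m (U + I)"
    using gram_inverse[OF HJc HJinj] by blast
  have HJH: "mat_adjoint HJ \<in> carrier_mat (U + I) B" using HJc by simp
  define L where "L = NH * mat_adjoint HJ"
  have L: "L \<in> carrier_mat (U + I) B" unfolding L_def using mult_carrier_mat[OF NH HJH] .
  have LHJ: "L * HJ = 1\<^sub>m (U + I)" unfolding L_def using assoc_mult_mat[OF NH HJH HJc] NHG by simp
  \<comment> \<open>injectivity of J\<close>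
  define E where "E = (0\<^sub>m U I :: complex mat) @\<^sub>r 1\<^sub>m I"
  have E: "E \<in> carrier_mat (U + I) I" unfolding E_def by auto
  have HJE: "HJ * E = J"
    unfolding HJ_def E_def using ac_ar_mult[OF H J zero_carrier_mat one_carrier_mat] H J by simp
  define LE where "LE = append_cols (0\<^sub>m I U) (1\<^sub>m I :: complex mat)"
  have LE: "LE \<in> carrier_mat I (U + I)" unfolding LE_def by simp
  have LEE: "LE * E = 1\<^sub>m I"
    unfolding LE_def E_def using ac_ar_mult[of "0\<^sub>m I U :: complex mat" I U "1\<^sub>m I" I "0\<^sub>m U I" I "1\<^sub>m I"] by simp
  have Jinj: "\<And>v. v \<in> carrier_vec I \<Longrightarrow> J *\<^sub>v v = 0\<^sub>v B \<Longrightarrow> v = 0\<^sub>v I"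
  proof -
    fix v :: "complex vec" assume v: "v \<in> carrier_vec I" "J *\<^sub>v v = 0\<^sub>v B"
    have Ev: "E *\<^sub>v v \<in> carrier_vec (U + I)" using E v by simp
    have "HJ *\<^sub>v (E *\<^sub>v v) = J *\<^sub>v v" using assoc_mult_mat_vec[OF HJc E v(1)] HJE by simp
    then have "E *\<^sub>v v = 0\<^sub>v (U + I)" using HJinj Ev v by simp
    then have "LE *\<^sub>v (E *\<^sub>v v) = 0\<^sub>v I" using LE by simp
    moreover have "LE *\<^sub>v (E *\<^sub>v v) = v" using assoc_mult_mat_vec[OF LE E v(1)] LEE v by simp
    ultimately show "v = 0\<^sub>v I" by simp
  qed
  \<comment> \<open>pseudo-inverse of S_T\<close>
  have S_Tr: "vec_space.rank U S_T = U" using S_T_rank S_T unfolding mrank_def by simp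
  have STZ: "S_T * pinv S_T = 1\<^sub>m U" and Zs: "pinv S_T \<in> carrier_mat T U"
    using pinv_surj[OF S_T full_row_rank_adj_inj[OF S_T S_Tr]] by auto
  \<comment> \<open>the candidate minimizer\<close>
  define P0 where "P0 = 1\<^sub>m B - J * pinv J"
  have P0mem: "P0 \<in> orth_projs B (B - I)" and P0J: "P0 * J = 0\<^sub>m B I"
    using P0_props[OF J Jinj] unfolding P0_def by auto
  have P0c: "P0 \<in> carrier_mat B B" using P0mem unfolding orth_projs_def by simp
  have cost0: "jml_cost Y_T Y_D S_T P0 H S_D = 0"
  proof -
    have "append_cols Y_T Y_D - H * append_cols S_T S_D = append_cols (Y_T - H * S_T) (Y_D - H * S_D)"
      using mult_ac[OF H S_T SDc] minus_ac[OF YTc YDc] H S_T SDc by simp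
    also have "Y_T - H * S_T = J * W_T" unfolding YT using lin2[of "H * S_T" B T "J * W_T"] H S_T J W_T by simp
    also have "Y_D - H * S_D = J * W_D" unfolding YD using lin2[of "H * S_D" B D "J * W_D"] H SDc J W_D by simp
    finally have e: "append_cols Y_T Y_D - H * append_cols S_T S_D = append_cols (J * W_T) (J * W_D)" .
    have "P0 * append_cols (J * W_T) (J * W_D) = append_cols (P0 * (J * W_T)) (P0 * (J * W_D))"
      using mult_ac[OF P0c, of "J * W_T" T "J * W_D" D] J W_T W_D by simp
    also have "P0 * (J * W_T) = 0\<^sub>m B T" using assoc_mult_mat[OF P0c J W_T, symmetric] P0J W_T by simp
    also have "P0 * (J * W_D) = 0\<^sub>m B D" using assoc_mult_mat[OF P0c J W_D, symmetric] P0J W_D by simp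
    finally show ?thesis unfolding jml_cost_def e ac_zero_zero by simp
  qed
  have ex: "is_jml_minimizer B U I D Y_T Y_D S_T P0 H S_D"
    unfolding is_jml_minimizer_def using P0mem H S_D cost0 frob_nonneg unfolding jml_cost_def by auto
  have uniq: "P = 1\<^sub>m B - J * pinv J \<and> P * Ht = P * H \<and> St = S_D"
    if min: "is_jml_minimizer B U I D Y_T Y_D S_T P Ht St" for P Ht St
  proof -
    have Pmem: "P \<in> orth_projs B (B - I)" and Ht: "Ht \<in> carrier_mat B U" and Stq: "St \<in> qpsk_mats U D"
      and le: "jml_cost Y_T Y_D S_T P Ht St \<le> jml_cost Y_T Y_D S_T P0 H S_D"
      using min P0mem H S_D unfolding is_jml_minimizer_def by auto
    have Pc: "P \<in> carrier_mat B B" and PP: "P * P = P" and PH: "mat_adjoint P = P"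
      using Pmem unfolding orth_projs_def by auto
    have Stc: "St \<in> carrier_mat U D" using Stq unfolding qpsk_mats_def by simp
    define K where "K = W_T * pinv S_T"
    have K: "K \<in> carrier_mat I U" unfolding K_def using W_T Zs by simp
    \<comment> \<open>zero cost\<close>
    have Mh: "P * (append_cols Y_T Y_D - Ht * append_cols S_T St) = append_cols (P * (Y_T - Ht * S_T)) (P * (Y_D - Ht * St))"
    proof -
      have "append_cols Y_T Y_D - Ht * append_cols S_T St = append_cols (Y_T - Ht * S_T) (Y_D - Ht * St)"
        using mult_ac[OF Ht S_T Stc] minus_ac[OF YTc YDc] Ht S_T Stc by simp
      then show ?thesis using mult_ac[OF Pc, of "Y_T - Ht * S_T" T "Y_D - Ht * St" D] YTc YDc Ht S_T Stc
        by (simp add: minus_carrier_mat)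
    qed
    have Mhc: "append_cols (P * (Y_T - Ht * S_T)) (P * (Y_D - Ht * St)) \<in> carrier_mat B (T + D)"
      using Pc YTc YDc Ht S_T Stc by (simp add: minus_carrier_mat)
    have "frob_sq (append_cols (P * (Y_T - Ht * S_T)) (P * (Y_D - Ht * St))) \<le> 0"
      using le cost0 unfolding jml_cost_def Mh by simp
    then have "append_cols (P * (Y_T - Ht * S_T)) (P * (Y_D - Ht * St)) = 0\<^sub>m B (T + D)"
      using frob_zero[OF Mhc] by simp
    then have E1: "P * (Y_T - Ht * S_T) = 0\<^sub>m B T" and E2: "P * (Y_D - Ht * St) = 0\<^sub>m B D"
      using ac_zero[of "P * (Y_T - Ht * S_T)" B T "P * (Y_D - Ht * St)" D] Pc YTc YDc Ht S_T Stc
      by (auto simp: minus_carrier_mat)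
    \<comment> \<open>algebra\<close>
    have E1': "P * (H * S_T) + P * (J * W_T) = P * (Ht * S_T)"
    proof (rule lin_sub_zero[of _ B T])
      have "P * (Y_T - Ht * S_T) = P * (H * S_T) + P * (J * W_T) - P * (Ht * S_T)"
        unfolding YT using Pc H J Ht S_T W_T
        by (simp add: mult_minus_distrib_mat[of _ B B _ T] mult_add_distrib_mat[of _ B B _ T] minus_carrier_mat)
      then show "P * (H * S_T) + P * (J * W_T) - P * (Ht * S_T) = 0\<^sub>m B T" using E1 by simp
    qed (insert Pc H J Ht S_T W_T, auto)
    have E2': "P * (H * S_D) + P * (J * W_D) = P * (Ht * St)"
    proof (rule lin_sub_zero[of _ B D])
      have "P * (Y_D - Ht * St) = P * (H * S_D) + P * (J * W_D) - P * (Ht * St)"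
        unfolding YD using Pc H J Ht SDc Stc W_D
        by (simp add: mult_minus_distrib_mat[of _ B B _ D] mult_add_distrib_mat[of _ B B _ D] minus_carrier_mat)
      then show "P * (H * S_D) + P * (J * W_D) - P * (Ht * St) = 0\<^sub>m B D" using E2 by simp
    qed (insert Pc H J Ht SDc Stc W_D, auto)
    have F1: "P * Ht = P * H + P * (J * K)"
    proof -
      have "(P * (Ht * S_T)) * pinv S_T = P * ((Ht * S_T) * pinv S_T)"
        using assoc_mult_mat[OF Pc mult_carrier_mat[OF Ht S_T] Zs] .
      also have "(Ht * S_T) * pinv S_T = Ht" using assoc_mult_mat[OF Ht S_T Zs] STZ Ht by simp
      finally have "P * Ht = (P * (Ht * S_T)) * pinv S_T" by simp
      also have "\<dots> = (P * (H * S_T) + P * (J * W_T)) * pinv S_T" using E1' by simp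
      also have "\<dots> = P * H + P * (J * K)"
        unfolding K_def using Pc H J S_T W_T Zs STZ
          assoc_mult_mat[OF Pc mult_carrier_mat[OF H S_T] Zs] assoc_mult_mat[OF H S_T Zs]
          assoc_mult_mat[OF Pc mult_carrier_mat[OF J W_T] Zs] assoc_mult_mat[OF J W_T Zs]
        by (simp add: add_mult_distrib_mat[of _ B T _ _ U])
      finally show ?thesis .
    qed
    define M where "M = (S_D - St) @\<^sub>r (W_D - K * St)"
    have A1: "S_D - St \<in> carrier_mat U D" using Stc by (simp add: minus_carrier_mat)
    have A2: "W_D - K * St \<in> carrier_mat I D" using W_D K Stc by (simp add: minus_carrier_mat)
    have Mc: "M \<in> carrier_mat (U + I) D" unfolding M_def using A1 A2 by simp
    have F2: "P * (HJ * M) = 0\<^sub>m B D"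
    proof -
      have "HJ * M = H * (S_D - St) + J * (W_D - K * St)"
        unfolding HJ_def M_def by (rule ac_ar_mult[OF H J A1 A2])
      then have "P * (HJ * M) = (P * (H * S_D) - P * (H * St)) + (P * (J * W_D) - P * (J * (K * St)))"
        using Pc H J SDc Stc W_D K
        by (simp add: mult_minus_distrib_mat[of _ B U _ D] mult_minus_distrib_mat[of _ B I _ D]
             mult_minus_distrib_mat[of _ B B _ D] mult_add_distrib_mat[of _ B B _ D] minus_carrier_mat)
      moreover have "P * (Ht * St) = P * (H * St) + P * (J * (K * St))"
      proof -
        have "P * (Ht * St) = (P * Ht) * St" using Pc Ht Stc by simp
        also have "\<dots> = P * (H * St) + P * (J * (K * St))"
          unfolding F1 using Pc H J K Stc
            assoc_mult_mat[OF Pc mult_carrier_mat[OF J K] Stc] assoc_mult_mat[OF J K Stc]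
          by (simp add: add_mult_distrib_mat[of _ B U _ _ D])
        finally show ?thesis .
      qed
      ultimately show ?thesis
        using lin4[of "P * (H * S_D)" B D "P * (J * W_D)" "P * (H * St)" "P * (J * (K * St))"] E2'
          Pc H J SDc Stc W_D K by simp
    qed
    obtain Q where Q: "Q \<in> carrier_mat B I"
      and kerQ: "\<forall>x \<in> carrier_vec B. P *\<^sub>v x = 0\<^sub>v B \<longrightarrow> (\<exists>c \<in> carrier_vec I. x = Q *\<^sub>v c)"
      using proj_kernel[OF Pmem] dimBUI by auto
    have "vec_space.rank (U + I) M \<le> I"
      by (rule rank_M_bound[OF Pc Q kerQ HJc L LHJ Mc F2])
    then have "mrank M \<le> I" unfolding mrank_def using Mc by simp
    then have StSD: "St = S_D"
      using not_eclipsed Stq unfolding eclipsed_ce_def M_def K_def by blast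
    define X where "X = W_D - W_T * pinv S_T * S_D"
    have X: "X \<in> carrier_mat I D" unfolding X_def using W_D W_T Zs SDc by (simp add: minus_carrier_mat)
    have "HJ * M = J * X"
    proof -
      have "HJ * M = H * (S_D - St) + J * (W_D - K * St)"
        unfolding HJ_def M_def by (rule ac_ar_mult[OF H J A1 A2])
      also have "S_D - St = 0\<^sub>m U D" using StSD SDc by simp
      also have "W_D - K * St = X" unfolding X_def K_def StSD ..
      finally show ?thesis using H J X by simp
    qed
    then have "(P * J) * X = 0\<^sub>m B D" using F2 Pc J X by simp
    then have PJ: "P * J = 0\<^sub>m B I"
      using eclipse_construct[OF pos(2) pos(5) S_D W_T W_D Zs mult_carrier_mat[OF Pc J]] not_eclipsed
      unfolding X_def by blast
    have "P * Ht = P * H"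
    proof -
      have "P * (J * K) = (P * J) * K" using Pc J K by simp
      then have "P * (J * K) = 0\<^sub>m B U" using PJ K by simp
      then show ?thesis using F1 Pc H by simp
    qed
    moreover have "P = 1\<^sub>m B - J * pinv J"
      by (rule P_final[OF Pc PH Q kerQ PP J Jinj PJ])
    ultimately show ?thesis using StSD by simp
  qed
  show ?thesis using ex uniq by blast
qed

end
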